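(* Let $A=(-1,0)$ and $B=(1,0)$. For $x\in\mathbb{R}^2$ with $|x|=r>1$, define $P^2(x)$ by two steps on the origin-centered circle of radius $r$. First, $y$ is the second intersection point of the line $xA$ with this circle. Then $P^2(x)$ is the second intersection point of the line $yB$ with this circle. Let $\varphi_1$ be the time-$1$ flow of the vector field $Y=-\frac{4\sin\alpha}{r}\frac{\partial}{\partial\alpha}$, written in polar coordinates $(\alpha,r)$. Then there exist constants $R$ and $C_5$ such that $$|P^2(x)-\varphi_1(x)|\le\frac{C_5}{|x|}$$ for all $x$ with $|x|\ge R$.
   Context: The vector $\partial/\partial\alpha$ at a point at distance $r$ from the origin has Euclidean length $r$. *)

theory Defs
  imports "HOL-Analysis.Analysis"
begin

text \<open>We identify the plane R^2 with the complex numbers. A = -1, B = 1.\<close>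

definition second_int :: "complex \<Rightarrow> complex \<Rightarrow> complex" where
  "second_int p q = (THE y. cmod y = cmod p \<and> (\<exists>t::real. y = p + of_real t * (q - p)) \<and> y \<noteq> p)"

definition P2 :: "complex \<Rightarrow> complex" where
  "P2 x = second_int (second_int x (-1)) 1"

text \<open>The vector field Y = -(4 sin alpha / r) d/d alpha in Cartesian form:
at z = r e^{i alpha}, d/d alpha = i z and sin alpha = Im z / r.\<close>
definition Yfield :: "complex \<Rightarrow> complex" where
  "Yfield z = - (of_real (4 * (Im z / cmod z) / cmod z)) * (\<i> * z)"

definition phi1 :: "complex \<Rightarrow> complex" where
  "phi1 x = (THE \<gamma>. \<gamma> 0 = x \<and> (\<forall>t. (\<gamma> has_vector_derivative Yfield (\<gamma> t)) (at t))) 1"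

end

theory Submission
  imports Defs
begin


lemma sec_t_unique:
  fixes a b q t :: real
  assumes "(a + t*(q-a))^2 + (b - t*b)^2 = a^2 + b^2" "t \<noteq> 0" and D: "(q-a)^2+b^2 \<noteq> 0"
  shows "t = 2*(a^2+b^2 - q*a)/((q-a)^2+b^2)"
proof -
  have "t * (2*(a*(q-a) - b^2) + t*((q-a)^2+b^2)) = 0"
    using assms(1) by (simp add: algebra_simps power2_eq_square)
  hence e: "2*(a*(q-a) - b^2) + t*((q-a)^2+b^2) = 0" using assms(2) by simp
  with e D show ?thesis by (simp add: field_simps) (simp add: power2_eq_square)
qed

lemma second_int_eq:
  fixes p :: complex and q r :: real
  assumes pr: "cmod p = r" and qr: "\<bar>q\<bar> < r"
  shows "second_int p (of_real q) = r^2 * (of_real q - p) / (r^2 - of_real q * p)"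
    and "cmod (second_int p (of_real q)) = r"
proof -
  obtain a b where p: "p = Complex a b" by (cases p)
  have r2: "r^2 = a^2 + b^2" using pr cmod_power2[of p] by (simp add: p)
  have rpos: "r > 0" using qr by linarith
  define D where "D = (q-a)^2+b^2"
  have Dpos: "D > 0"
  proof -
    have "\<bar>a\<bar> \<le> r" using pr abs_Re_le_cmod[of p] by (simp add: p)
    have qq: "\<bar>q\<bar>^2 < r^2" using qr by (intro power_strict_mono) auto
    have "q \<noteq> a \<or> b \<noteq> 0"
    proof (rule ccontr)
      assume "\<not> (q \<noteq> a \<or> b \<noteq> 0)"
      hence "r^2 = q^2" using r2 by simp
      thus False using qq by simp
    qed
    thus ?thesis unfolding D_def
    proof
      assume "q \<noteq> a" hence "(q-a)^2 > 0" by simp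
      thus "(q-a)^2+b^2 > 0" by (simp add: add_pos_nonneg)
    next
      assume "b \<noteq> 0" hence "b^2 > 0" by simp
      thus "(q-a)^2+b^2 > 0" by (simp add: add_nonneg_pos)
    qed
  qed
  define t0 where "t0 = 2*(a^2+b^2 - q*a)/D"
  have qa: "q*a < a^2 + b^2"
  proof -
    have "\<bar>a\<bar> \<le> r" using pr abs_Re_le_cmod[of p] by (simp add: p)
    have "\<bar>q\<bar>*\<bar>a\<bar> \<le> \<bar>q\<bar> * r" using \<open>\<bar>a\<bar> \<le> r\<close> by (simp add: mult_left_mono)
    also have "\<bar>q\<bar> * r < r * r" using qr rpos by (intro mult_strict_right_mono) auto
    finally have "\<bar>q*a\<bar> < r*r" by (simp add: abs_mult)
    hence "q*a < r*r" by (meson abs_ge_self le_less_trans)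
    thus ?thesis using r2 by (simp add: power2_eq_square)
  qed
  have t0nz: "t0 \<noteq> 0" using Dpos qa by (simp add: t0_def)
  define y0 where "y0 = p + of_real t0 * (of_real q - p)"
  have normy: "(a + t0*(q-a))^2 + (b - t0*b)^2 = a^2 + b^2"
  proof -
    have tD: "t0 * D = 2*(a^2+b^2 - q*a)" using Dpos by (simp add: t0_def)
    have "(a + t0*(q-a))^2 + (b - t0*b)^2 - (a^2 + b^2) = t0*(2*(a*q-a^2-b^2) + t0*D)"
      by (simp add: D_def algebra_simps power2_eq_square)
    also have "\<dots> = 0" using tD by (simp add: algebra_simps)
    finally show ?thesis by simp
  qed
  have cy: "cmod y0 = r"
  proof -
    have "y0 = Complex (a + t0*(q-a)) (b - t0*b)"
      by (simp add: y0_def p complex_eq_iff algebra_simps)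
    thus ?thesis using normy r2 rpos by (simp add: cmod_def real_sqrt_unique)
  qed
  have uniq: "y = y0" if "cmod y = cmod p \<and> (\<exists>t::real. y = p + of_real t * (of_real q - p)) \<and> y \<noteq> p" for y
  proof -
    from that obtain t where y: "y = p + of_real t * (of_real q - p)" and cy': "cmod y = r" and yp: "y \<noteq> p"
      using pr by blast
    have yc: "y = Complex (a + t*(q-a)) (b - t*b)"
      by (simp add: y p complex_eq_iff algebra_simps)
    have "t \<noteq> 0" using yp y by auto
    moreover have "(a + t*(q-a))^2 + (b - t*b)^2 = a^2 + b^2"
      using cy' r2 cmod_power2[of y] by (simp add: yc)
    ultimately have "t = 2*(a^2+b^2-q*a)/((q-a)^2+b^2)"
      by (intro sec_t_unique) (use Dpos D_def in auto)
    hence "t = t0" by (simp add: t0_def D_def)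
    thus ?thesis by (simp add: y y0_def)
  qed
  have ex: "cmod y0 = cmod p \<and> (\<exists>t::real. y0 = p + of_real t * (of_real q - p)) \<and> y0 \<noteq> p"
  proof -
    have "of_real q \<noteq> p" using Dpos by (auto simp: p complex_eq_iff D_def)
    thus ?thesis using cy pr t0nz by (auto simp: y0_def)
  qed
  have si: "second_int p (of_real q) = y0"
    unfolding second_int_def
  proof (rule the1_equality)
    show "\<exists>!y. cmod y = cmod p \<and> (\<exists>t::real. y = p + of_real t * (of_real q - p)) \<and> y \<noteq> p"
    proof (rule ex1I)
      show "cmod y0 = cmod p \<and> (\<exists>t::real. y0 = p + of_real t * (of_real q - p)) \<and> y0 \<noteq> p" by (rule ex)
    next
      fix y assume "cmod y = cmod p \<and> (\<exists>t::real. y = p + of_real t * (of_real q - p)) \<and> y \<noteq> p"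
      thus "y = y0" by (rule uniq)
    qed
  qed (rule ex)
  show "cmod (second_int p (of_real q)) = r" using si cy by simp
  have den: "(r^2 - of_real q * p) \<noteq> 0"
  proof
    assume "(r^2 - of_real q * p) = 0"
    hence h: "(of_real r)^2 = of_real q * p" by (simp add: right_minus_eq)
    have "cmod ((of_real r)^2 :: complex) = r^2" by (simp add: norm_power)
    moreover have "cmod (of_real q * p) = \<bar>q\<bar> * r" using pr by (simp add: norm_mult)
    ultimately have "\<bar>q\<bar> * r = r^2" using h by simp
    thus False using qr rpos by (simp add: power2_eq_square)
  qed
  have e1: "(of_real r)^2 = p * cnj p" using pr complex_norm_square[of p] by simp
  have e2: "of_real D = (of_real q - p) * (of_real q - cnj p)"
    by (simp add: D_def p complex_eq_iff power2_eq_square algebra_simps)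
  have e3: "p + cnj p = 2 * of_real a" by (simp add: p complex_eq_iff)
  have tDr: "t0 * D = 2*(r^2 - q*a)" using Dpos r2 by (simp add: t0_def)
  have "of_real t0 * of_real D = (of_real (2*(r^2 - q*a)) :: complex)"
    by (metis tDr of_real_mult)
  also have "\<dots> = 2 * (of_real r)^2 - of_real q * (2 * of_real a)" by simp
  also have "\<dots> = 2 * (p * cnj p) - of_real q * (p + cnj p)" by (simp only: e1 e3)
  finally have tD: "of_real t0 * of_real D = 2 * (p * cnj p) - of_real q * (p + cnj p)" .
  have "y0 * ((of_real r)^2 - of_real q * p) - (of_real r)^2 * (of_real q - p)
      = p * (2 * (p * cnj p) - of_real q * (p + cnj p) - of_real t0 * ((of_real q - p) * (of_real q - cnj p)))"
    unfolding y0_def e1 by (simp add: algebra_simps)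
  also have "\<dots> = 0" using tD e2 by simp
  finally have "y0 * (r^2 - of_real q * p) = r^2 * (of_real q - p)" by simp
  thus "second_int p (of_real q) = r^2 * (of_real q - p) / (r^2 - of_real q * p)"
    using si den by (simp add: field_simps)
qed


lemma Y_circ:
  assumes "cmod z = r" "r > 0"
  shows "Yfield z = of_real (2/r^2) * (of_real (r^2) - z^2)"
proof -
  obtain a b where z: "z = Complex a b" by (cases z)
  have r2: "r^2 = a^2 + b^2" using assms cmod_power2[of z] by (simp add: z)
  hence r2': "r*r = a*a+b*b" by (simp add: power2_eq_square)
  show ?thesis
    using assms(2) unfolding Yfield_def assms(1)
    by (simp add: z complex_eq_iff r2 field_simps power2_eq_square) (use r2' in algebra)
qed

lemma vd_inverse:
  fixes g :: "real \<Rightarrow> complex"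
  assumes "(g has_vector_derivative g') (at t)" "g t \<noteq> 0"
  shows "((\<lambda>t. inverse (g t)) has_vector_derivative (g' * (- (inverse (g t) ^ 2)))) (at t)"
proof -
  have "((inverse \<circ> g) has_vector_derivative (g' * (- (inverse (g t) ^ Suc (Suc 0))))) (at t)"
    by (rule field_vector_diff_chain_at[OF assms(1)]) (rule DERIV_inverse[OF assms(2)])
  thus ?thesis by (simp add: o_def eval_nat_numeral)
qed

lemma mob_norm:
  fixes x :: complex and r T :: real
  assumes "cmod x = r" "r > 0" "\<bar>T\<bar> < 1"
  shows "of_real r + x * of_real T \<noteq> 0"
    and "cmod (of_real r * (x + of_real r * of_real T) / (of_real r + x * of_real T)) = r"
proof -
  have "cmod (x * of_real T) = r * \<bar>T\<bar>" using assms by (simp add: norm_mult)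
  also have "\<dots> < r" using assms by simp
  finally have lt: "cmod (x * of_real T) < r" .
  show nz: "of_real r + x * of_real T \<noteq> 0"
  proof
    assume "of_real r + x * of_real T = 0"
    hence "x * of_real T = - of_real r" by (simp add: add_eq_0_iff)
    hence "cmod (x * of_real T) = r" using assms(2) by simp
    with lt show False by simp
  qed
  have xc: "x * cnj x = of_real (r^2)" using complex_norm_square[of x] assms by simp
  have e: "x + of_real r * of_real T = (x / of_real r) * cnj (of_real r + x * of_real T)"
    using assms(2) xc by (simp add: field_simps power2_eq_square)
  have "cmod (x + of_real r * of_real T) = cmod (of_real r + x * of_real T)"
    unfolding e by (simp only: norm_mult norm_divide complex_mod_cnj) (use assms in \<open>simp add: abs_of_pos\<close>)
  thus "cmod (of_real r * (x + of_real r * of_real T) / (of_real r + x * of_real T)) = r"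
    using nz assms(2) by (simp add: norm_mult norm_divide abs_of_pos)
qed

lemma alg1:
  fixes R x t :: complex
  assumes "R \<noteq> 0" "R + x*t \<noteq> 0"
  shows "2/R^2 * (R^2 - (R*(x+R*t)/(R+x*t))^2) = (1 - t^2)*(2/R) * (R*(R*(R+x*t) - (x+R*t)*x)/(R+x*t)^2)"
proof -
  have "2/R^2 * (R^2 - (R*(x+R*t)/(R+x*t))^2) = 2 * ((R+x*t)^2 - (x+R*t)^2) / (R+x*t)^2"
    using assms by (simp add: field_simps) algebra
  also have "\<dots> = (1 - t^2)*(2/R) * (R*(R*(R+x*t) - (x+R*t)*x)/(R+x*t)^2)"
    using assms by (simp add: field_simps) algebra
  finally show ?thesis .
qed

lemma th_deriv:
  assumes "r > 0"
  shows "((\<lambda>t. complex_of_real (tanh (2*t/r))) has_vector_derivative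
          of_real ((1 - tanh (2*t/r)^2) * (2/r))) (at t)"
  using assms by (intro derivative_intros has_vector_derivative_of_real) (auto intro!: derivative_eq_intros)

lemma gamma_sol:
  fixes x :: complex and r :: real
  assumes xr: "cmod x = r" and rpos: "r > 0"
  defines "\<gamma> \<equiv> \<lambda>t. of_real r * (x + of_real r * of_real (tanh (2*t/r))) / (of_real r + x * of_real (tanh (2*t/r)))"
  shows "(\<gamma> has_vector_derivative Yfield (\<gamma> t)) (at t)"
proof -
  define T where "T = tanh (2*t/r)"
  have T1: "\<bar>T\<bar> < 1" unfolding T_def using tanh_real_bounds[of "2*t/r"] by auto
  note mn = mob_norm[OF xr rpos T1]
  define h where "h = (\<lambda>w. of_real r * (x + of_real r * w) / (of_real r + x * w))"
  have hd: "(h has_field_derivative (of_real r * (of_real r * (of_real r + x * of_real T) - (x + of_real r * of_real T) * x) / (of_real r + x * of_real T)^2)) (at (of_real T))"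
    unfolding h_def using mn(1)
    by (auto intro!: derivative_eq_intros simp: power2_eq_square field_simps)
  have "((h \<circ> (\<lambda>t. complex_of_real (tanh (2*t/r)))) has_vector_derivative
          (of_real ((1 - T^2) * (2/r)) * (of_real r * (of_real r * (of_real r + x * of_real T) - (x + of_real r * of_real T) * x) / (of_real r + x * of_real T)^2))) (at t)"
    unfolding T_def by (rule field_vector_diff_chain_at[OF th_deriv[OF rpos]]) (rule hd[unfolded T_def])
  moreover have "h \<circ> (\<lambda>t. complex_of_real (tanh (2*t/r))) = \<gamma>"
    by (simp add: h_def \<gamma>_def o_def fun_eq_iff)
  moreover have "Yfield (\<gamma> t) = of_real ((1 - T^2) * (2/r)) * (of_real r * (of_real r * (of_real r + x * of_real T) - (x + of_real r * of_real T) * x) / (of_real r + x * of_real T)^2)"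
  proof -
    have "Yfield (\<gamma> t) = of_real (2/r^2) * (of_real (r^2) - (\<gamma> t)^2)"
      by (rule Y_circ[OF _ rpos]) (use mn(2) in \<open>simp add: \<gamma>_def T_def\<close>)
    also have "\<dots> = of_real ((1 - T^2) * (2/r)) * (of_real r * (of_real r * (of_real r + x * of_real T) - (x + of_real r * of_real T) * x) / (of_real r + x * of_real T)^2)"
      unfolding \<gamma>_def T_def[symmetric] using alg1[of "of_real r" x "of_real T"] mn(1) rpos
      by (simp add: of_real_power)
    finally show ?thesis .
  qed
  ultimately show ?thesis by simp
qed


lemma alg2:
  fixes R d th d' th' :: complex
  assumes "R \<noteq> 0" "R - d*th \<noteq> 0" "d' = 2/R^2 * (R^2 - d^2)" "th' = (1 - th^2) * (2/R)"
  shows "R * (d - R * th) * ((0 - (d * th' + d' * th)) * (- (inverse (R - d * th) ^ 2)))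
       + R * (d' - R * th') * inverse (R - d*th) = 0"
  using assms(1,2) unfolding assms(3,4) by (simp add: field_simps) algebra

lemma Y_tang: "z * cnj (Yfield z) + Yfield z * cnj z = 0"
proof -
  define c where "c = complex_of_real (4 * (Im z / cmod z) / cmod z)"
  have "Yfield z = - c * (\<i> * z)" by (simp add: Yfield_def c_def)
  moreover have "cnj c = c" by (simp add: c_def)
  ultimately have "z * cnj (Yfield z) + Yfield z * cnj z = z * (- c * (- \<i> * cnj z)) + (- c * (\<i> * z)) * cnj z"
    by simp
  also have "\<dots> = 0" by (simp add: algebra_simps)
  finally show ?thesis .
qed

lemma sol_unique:
  fixes x :: complex and r :: real and \<delta> :: "real \<Rightarrow> complex"
  assumes xr: "cmod x = r" and rpos: "r > 0" and d0: "\<delta> 0 = x"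
    and dd: "\<And>t. (\<delta> has_vector_derivative Yfield (\<delta> t)) (at t)"
  shows "\<delta> t = of_real r * (x + of_real r * of_real (tanh (2*t/r))) / (of_real r + x * of_real (tanh (2*t/r)))"
proof -
  have nd: "((\<lambda>t. \<delta> t * cnj (\<delta> t)) has_vector_derivative 0) (at s within UNIV)" for s
  proof -
    have "((\<lambda>t. \<delta> t * cnj (\<delta> t)) has_vector_derivative (\<delta> s * cnj (Yfield (\<delta> s)) + Yfield (\<delta> s) * cnj (\<delta> s))) (at s)"
      by (intro has_vector_derivative_mult has_vector_derivative_cnj dd)
    moreover have "\<delta> s * cnj (Yfield (\<delta> s)) + Yfield (\<delta> s) * cnj (\<delta> s) = 0"
      by (rule Y_tang)
    ultimately show ?thesis by simp
  qed
  have "\<exists>c. \<forall>s. \<delta> s * cnj (\<delta> s) = c"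
    by (rule has_vector_derivative_zero_constant[OF convex_UNIV nd]) auto
  then obtain c where c: "\<And>s. \<delta> s * cnj (\<delta> s) = c" by blast
  have nr: "cmod (\<delta> s) = r" for s
  proof -
    have "of_real ((cmod (\<delta> s))^2) = (of_real ((cmod (\<delta> 0))^2) :: complex)"
      unfolding complex_norm_square c ..
    hence "(cmod (\<delta> s))^2 = (cmod (\<delta> 0))^2" by (simp only: of_real_eq_iff)
    hence "(cmod (\<delta> s))^2 = r^2" by (simp only: d0 xr)
    thus ?thesis using rpos by (simp add: power2_eq_iff_nonneg)
  qed
  define th where "th = (\<lambda>s. complex_of_real (tanh (2 * s / r)))"
  define R where "R = complex_of_real r"
  have Rnz: "R \<noteq> 0" using rpos by (simp add: R_def)
  have T1: "cmod (th s) < 1" for s unfolding th_def using tanh_real_bounds[of "2 * s / r"] by auto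
  have den: "R - \<delta> s * th s \<noteq> 0" for s
  proof
    assume "R - \<delta> s * th s = 0"
    hence "\<delta> s * th s = R" by simp
    hence "cmod (\<delta> s * th s) = r" using rpos by (simp add: R_def)
    moreover have "cmod (\<delta> s * th s) < r" using nr[of s] T1[of s] rpos by (simp add: norm_mult)
    ultimately show False by simp
  qed
  define v where "v = (\<lambda>s. R * (\<delta> s - R * th s) * inverse (R - \<delta> s * th s))"
  have vd: "(v has_vector_derivative 0) (at s within UNIV)" for s
  proof -
    define d' where "d' = Yfield (\<delta> s)"
    define th' where "th' = complex_of_real ((1 - tanh (2 * s / r)^2) * (2/r))"
    have d'e: "d' = 2/R^2 * (R^2 - (\<delta> s)^2)"
      unfolding d'_def R_def by (simp add: Y_circ[OF nr rpos])
    have th'e: "th' = (1 - (th s)^2) * (2/R)" unfolding th'_def th_def R_def by simp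
    have t': "(th has_vector_derivative th') (at s)" unfolding th_def th'_def by (rule th_deriv[OF rpos])
    have D1: "((\<lambda>s. R * (\<delta> s - R * th s)) has_vector_derivative R * (d' - R * th')) (at s)"
      unfolding d'_def by (intro has_vector_derivative_mult_right has_vector_derivative_diff dd t')
    have D2': "((\<lambda>s. R - \<delta> s * th s) has_vector_derivative (0 - (\<delta> s * th' + d' * th s))) (at s)"
      unfolding d'_def by (intro has_vector_derivative_diff has_vector_derivative_const has_vector_derivative_mult dd t')
    have D2: "((\<lambda>s. inverse (R - \<delta> s * th s)) has_vector_derivative ((0 - (\<delta> s * th' + d' * th s)) * (- (inverse (R - \<delta> s * th s) ^ 2)))) (at s)"
      by (rule vd_inverse[OF D2' den])
    have hv: "(v has_vector_derivative (R * (\<delta> s - R * th s) * ((0 - (\<delta> s * th' + d' * th s)) * (- (inverse (R - \<delta> s * th s) ^ 2)))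
       + R * (d' - R * th') * inverse (R - \<delta> s * th s))) (at s)"
      unfolding v_def by (rule has_vector_derivative_mult[OF D1 D2])
    have he: "R * (\<delta> s - R * th s) * ((0 - (\<delta> s * th' + d' * th s)) * (- (inverse (R - \<delta> s * th s) ^ 2)))
       + R * (d' - R * th') * inverse (R - \<delta> s * th s) = 0"
      by (rule alg2[OF Rnz den d'e th'e])
    show ?thesis using hv unfolding he by simp
  qed
  have "\<exists>k. \<forall>s. v s = k"
    by (rule has_vector_derivative_zero_constant[OF convex_UNIV vd]) auto
  then obtain k where k: "\<And>s. v s = k" by blast
  have "v 0 = x" using Rnz by (simp add: v_def th_def d0)
  hence vt: "v t = x" using k[of t] k[of 0] by simp
  have dn: "R + x * th t \<noteq> 0"
  proof -
    have "\<bar>tanh (2*t/r)\<bar> < 1" using tanh_real_bounds[of "2*t/r"] by (auto simp: abs_less_iff)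
    from mob_norm(1)[OF xr rpos this] show ?thesis by (simp add: R_def th_def)
  qed
  have "R * (\<delta> t - R * th t) = x * (R - \<delta> t * th t)"
    using vt den[of t] unfolding v_def by (simp add: field_simps)
  hence "\<delta> t * (R + x * th t) = R * (x + R * th t)" by (simp add: algebra_simps)
  hence "\<delta> t = R * (x + R * th t) / (R + x * th t)" using dn by (simp add: field_simps)
  thus ?thesis by (simp add: R_def th_def)
qed



lemma phi1_eq:
  fixes x :: complex and r :: real
  assumes xr: "cmod x = r" and rpos: "r > 0"
  shows "phi1 x = of_real r * (x + of_real r * of_real (tanh (2/r))) / (of_real r + x * of_real (tanh (2/r)))"
proof -
  define g where "g = (\<lambda>t. of_real r * (x + of_real r * of_real (tanh (2*t/r))) / (of_real r + x * of_real (tanh (2*t/r))))"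
  have Pg: "g 0 = x \<and> (\<forall>t. (g has_vector_derivative Yfield (g t)) (at t))"
  proof
    show "g 0 = x" using rpos by (simp add: g_def)
    show "\<forall>t. (g has_vector_derivative Yfield (g t)) (at t)"
      unfolding g_def using gamma_sol[OF xr rpos] by blast
  qed
  have "(THE \<gamma>. \<gamma> 0 = x \<and> (\<forall>t. (\<gamma> has_vector_derivative Yfield (\<gamma> t)) (at t))) = g"
  proof (rule the1_equality)
    show "\<exists>!\<gamma>. \<gamma> 0 = x \<and> (\<forall>t. (\<gamma> has_vector_derivative Yfield (\<gamma> t)) (at t))"
    proof (rule ex1I)
      show "g 0 = x \<and> (\<forall>t. (g has_vector_derivative Yfield (g t)) (at t))" by (rule Pg)
    next
      fix \<gamma> assume h: "\<gamma> 0 = x \<and> (\<forall>t. (\<gamma> has_vector_derivative Yfield (\<gamma> t)) (at t))"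
      show "\<gamma> = g"
      proof
        fix t
        show "\<gamma> t = g t" unfolding g_def
          by (rule sol_unique[OF xr rpos]) (use h in auto)
      qed
    qed
  qed (rule Pg)
  thus ?thesis unfolding phi1_def by (simp add: g_def)
qed

lemma alg3:
  fixes R x :: complex
  assumes "R^2 + x \<noteq> 0" "1 + R^2 + 2*x \<noteq> 0" "R^2 - R^2 * (-1 - x) / (R^2 + x) \<noteq> 0"
  shows "R^2 * (1 - R^2 * (-1 - x) / (R^2 + x)) / (R^2 - R^2 * (-1 - x) / (R^2 + x))
       = (2*R^2 + x*(1 + R^2)) / (1 + R^2 + 2*x)"
proof -
  have e: "R^2 - R^2 * (-1 - x) / (R^2 + x) = R^2 * (1 + R^2 + 2*x) / (R^2 + x)"
    using assms(1) by (simp add: field_simps)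
  have R0: "R^2 \<noteq> 0" using assms(3) e by auto
  have e1: "1 - R^2 * (-1 - x) / (R^2 + x) = (2*R^2 + x*(1 + R^2)) / (R^2 + x)"
    using assms(1) by (simp add: field_simps)
  show ?thesis unfolding e e1 using assms(1,2) R0 by simp
qed

lemma alg4:
  fixes R x :: complex
  assumes "R \<noteq> 0" "1 + R^2 \<noteq> 0" "1 + R^2 + 2*x \<noteq> 0"
  shows "(2*R^2 + x*(1 + R^2)) / (1 + R^2 + 2*x) = R * (x + R * (2*R/(1+R^2))) / (R + x * (2*R/(1+R^2)))"
proof -
  have e: "R + x * (2*R/(1+R^2)) = R * (1 + R^2 + 2*x) / (1 + R^2)"
    using assms by (simp add: field_simps)
  have e1: "x + R * (2*R/(1+R^2)) = (2*R^2 + x*(1 + R^2)) / (1+R^2)"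
    using assms by (simp add: field_simps power2_eq_square)
  show ?thesis unfolding e e1 using assms by simp
qed

lemma P2_eq:
  fixes x :: complex and r :: real
  assumes xr: "cmod x = r" and r1: "r > 1"
  shows "P2 x = of_real r * (x + of_real r * of_real (2*r/(1+r^2))) / (of_real r + x * of_real (2*r/(1+r^2)))"
proof -
  have a1: "\<bar>-1::real\<bar> < r" "\<bar>1::real\<bar> < r" using r1 by auto
  have "second_int x (-1) = second_int x (of_real (-1))" by simp
  note y = second_int_eq[OF xr a1(1), folded this]
  define y where "y = second_int x (-1)"
  have yr: "cmod y = r" using y(2) by (simp add: y_def)
  have P: "P2 x = r^2 * (1 - y) / (r^2 - y)"
    using second_int_eq(1)[OF yr a1(2)] by (simp add: P2_def y_def)
  have ye: "y = r^2 * (-1 - x) / (r^2 + x)" using y(1) by (simp add: y_def)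
  have n1: "(of_real r)^2 + x \<noteq> 0"
  proof
    assume "(of_real r)^2 + x = 0"
    hence "x = - ((of_real r)^2)" by (simp add: add_eq_0_iff)
    hence "cmod x = r^2" by (simp add: norm_power)
    with xr r1 show False by (simp add: power2_eq_square)
  qed
  have n2: "1 + (of_real r)^2 + 2*x \<noteq> 0"
  proof
    assume "1 + (of_real r)^2 + 2*x = 0"
    hence "2*x = - of_real (1 + r^2)" by (simp add: add_eq_0_iff)
    hence "cmod (2*x) = \<bar>1 + r^2\<bar>" by (simp only: norm_minus_cancel norm_of_real)
    hence "cmod (2*x) = 1 + r^2" by simp
    hence "2*r = 1 + r^2" using xr by (simp add: norm_mult)
    hence "(r-1)^2 = 0" by (simp add: power2_eq_square algebra_simps)
    with r1 show False by simp
  qed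
  have n3: "(of_real r)^2 - y \<noteq> 0"
  proof
    assume "(of_real r)^2 - y = 0"
    hence "y = (of_real r)^2" by simp
    hence "cmod y = r^2" by (simp add: norm_power)
    with yr r1 show False by (simp add: power2_eq_square)
  qed
  have n4: "(1 + r^2) \<noteq> 0" by (smt (verit) zero_le_power2)
  have "P2 x = (2*(of_real r)^2 + x*(1 + (of_real r)^2)) / (1 + (of_real r)^2 + 2*x)"
    unfolding P ye using alg3[OF n1 n2] n3 unfolding ye by (simp add: of_real_power)
  also have "\<dots> = of_real r * (x + of_real r * of_real (2*r/(1+r^2))) / (of_real r + x * of_real (2*r/(1+r^2)))"
  proof -
    have "1 + (of_real r)^2 = (of_real (1 + r^2) :: complex)" by simp
    hence n4c: "1 + (of_real r)^2 \<noteq> (0::complex)" using n4 by (metis of_real_eq_0_iff)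
    have "of_real r \<noteq> (0::complex)" using r1 by simp
    from alg4[OF this n4c n2] show ?thesis by (simp add: of_real_power)
  qed
  finally show ?thesis .
qed



lemma tanh_upper:
  fixes y :: real assumes "0 \<le> y" "y \<le> 1/2"
  shows "tanh y \<le> y + 2*y^2"
proof -
  define e where "e = exp (-2*y)"
  have e1: "1 - 2*y \<le> e" unfolding e_def using exp_ge_add_one_self[of "-2*y"] by simp
  have epos: "e > 0" unfolding e_def by simp
  have "tanh y = (1 - e) / (1 + e)" unfolding e_def by (simp add: tanh_real_altdef)
  also have "\<dots> \<le> (2*y) / (2 - 2*y)"
    using e1 epos assms by (intro frac_le) auto
  also have "\<dots> \<le> y + 2*y^2"
  proof -
    have "2*y \<le> (y + 2*y^2) * (2 - 2*y)"
    proof -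
      have "(y + 2*y^2) * (2 - 2*y) - 2*y = 2*y^2*(1 - 2*y)" by (simp add: algebra_simps power2_eq_square)
      moreover have "2*y^2*(1 - 2*y) \<ge> 0" using assms by simp
      ultimately show ?thesis by linarith
    qed
    thus ?thesis using assms by (simp add: divide_le_eq)
  qed
  finally show ?thesis .
qed

lemma tanh_lower:
  fixes y :: real assumes "0 \<le> y" "y \<le> 1/2"
  shows "y - y^2 \<le> tanh y"
proof -
  define e where "e = exp (-2*y)"
  have E: "1 + 2*y \<le> exp (2*y)" using exp_ge_add_one_self[of "2*y"] by simp
  have e1: "e \<le> 1 / (1 + 2*y)" unfolding e_def using E assms
    by (simp add: exp_minus field_simps)
  have epos: "e > 0" unfolding e_def by simp
  have "y - y^2 \<le> y / (1 + y)"
  proof -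
    have "(y - y^2)*(1+y) \<le> y" using assms by (simp add: algebra_simps power2_eq_square)
    thus ?thesis using assms by (simp add: le_divide_eq)
  qed
  also have "y / (1 + y) \<le> (1 - e) / (1 + e)"
  proof -
    have "e*(1+2*y) \<le> 1" using e1 assms by (simp add: le_divide_eq)
    hence h: "y*(1+e) \<le> (1-e)*(1+y)" by (simp add: algebra_simps)
    have p: "0 < 1 + y" "0 < 1 + e" using assms epos by auto
    show ?thesis using h p by (simp add: divide_simps)
  qed
  also have "\<dots> = tanh y" unfolding e_def by (simp add: tanh_real_altdef)
  finally show ?thesis .
qed

lemma alg5:
  fixes R x S T :: complex
  assumes "R + x*S \<noteq> 0" "R + x*T \<noteq> 0"
  shows "R*(x+R*S)/(R+x*S) - R*(x+R*T)/(R+x*T) = R*(S-T)*(R^2-x^2)/((R+x*S)*(R+x*T))"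
  using assms by (simp add: field_simps) algebra

lemma den_ge:
  fixes x :: complex and r u :: real
  assumes "cmod x = r" "r > 0" "0 \<le> u" "u \<le> 1/2"
  shows "cmod (of_real r + x * of_real u) \<ge> r/2"
proof -
  have "cmod (of_real r :: complex) - cmod (x * of_real u) \<le> cmod (of_real r + x * of_real u)"
    by (rule norm_diff_ineq)
  moreover have "cmod (x * of_real u) = r * u" using assms by (simp add: norm_mult)
  moreover have "r * u \<le> r/2" using assms by (simp add: mult_left_mono[of u "1/2" r, simplified])
  moreover have "cmod (of_real r :: complex) = r" using assms by simp
  ultimately show ?thesis using assms by linarith
qed


lemma sT_bound:
  fixes r :: real assumes r: "r \<ge> 10"
  shows "\<bar>2*r/(1+r^2) - tanh (2/r)\<bar> \<le> 9/r^2"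
    and "0 \<le> 2*r/(1+r^2)" "2*r/(1+r^2) \<le> 1/2"
    and "0 \<le> tanh (2/r)" "tanh (2/r) \<le> 1/2"
proof -
  define y where "y = 2/r"
  have rp: "r > 0" using r by simp
  have y0: "0 \<le> y" "y \<le> 1/5" using r by (auto simp: y_def field_simps)
  have tu: "tanh y \<le> y + 2*y^2" by (rule tanh_upper) (use y0 in auto)
  have tl: "y - y^2 \<le> tanh y" by (rule tanh_lower) (use y0 in auto)
  have y2: "y^2 = 4/r^2" by (simp add: y_def power2_eq_square)
  have yy: "y^2 \<le> y * (1/5)" using mult_left_mono[OF y0(2) y0(1)] by (simp add: power2_eq_square)
  hence y2b: "y^2 \<le> 1/25" using y0 by linarith
  show "0 \<le> tanh (2/r)" using tl yy y0 unfolding y_def[symmetric] by linarith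
  show "tanh (2/r) \<le> 1/2" using tu y0 y2b unfolding y_def[symmetric] by linarith
  have p1: "0 < 1 + r^2" by (simp add: add_pos_nonneg)
  have sy: "2*r/(1+r^2) - y = - (2/(r*(1+r^2)))"
    using rp p1 by (simp add: y_def field_simps) (simp add: power2_eq_square)
  have "(r-1)^2 = r^2 - 2*r + 1" by (simp add: power2_eq_square algebra_simps)
  moreover have "0 \<le> (r-1)^2" by simp
  ultimately have "2*r \<le> 1 + r^2" by linarith
  hence "2/(r*(1+r^2)) \<le> 1/r^2" using rp p1 by (simp add: divide_simps power2_eq_square)
  moreover have "2/(r*(1+r^2)) \<ge> 0" using rp p1 by simp
  ultimately have "\<bar>2*r/(1+r^2) - y\<bar> \<le> 1/r^2" unfolding sy by simp
  moreover have "\<bar>y - tanh y\<bar> \<le> 8/r^2" using tu tl y2 by (simp add: abs_le_iff)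
  ultimately show "\<bar>2*r/(1+r^2) - tanh (2/r)\<bar> \<le> 9/r^2" unfolding y_def[symmetric] by (simp add: abs_le_iff)
  show "0 \<le> 2*r/(1+r^2)" using rp p1 by simp
  have "2*r/(1+r^2) \<le> 2*r/(r^2)" using rp by (intro divide_left_mono) (use p1 in \<open>auto simp: power2_eq_square intro!: mult_pos_pos\<close>)
  also have "\<dots> = 2/r" using rp by (simp add: power2_eq_square)
  also have "\<dots> \<le> 1/2" using r by (simp add: divide_simps)
  finally show "2*r/(1+r^2) \<le> 1/2" .
qed


lemma main_bound:
  fixes x :: complex and r :: real
  assumes xr: "cmod x = r" and r: "r \<ge> 10"
  shows "cmod (P2 x - phi1 x) \<le> 100 / r"
proof -
  have rp: "r > 0" "r > 1" using r by auto
  define s where "s = 2*r/(1+r^2)"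
  define T where "T = tanh (2/r)"
  note b = sT_bound[OF r, folded s_def T_def]
  define R where "R = (of_real r :: complex)"
  define A where "A = cmod (R + x * of_real s)"
  define B where "B = cmod (R + x * of_real T)"
  have A: "A \<ge> r/2" unfolding A_def R_def by (rule den_ge[OF xr rp(1) b(2,3)])
  have B: "B \<ge> r/2" unfolding B_def R_def by (rule den_ge[OF xr rp(1) b(4,5)])
  have nA: "R + x * of_real s \<noteq> 0" using A rp unfolding A_def by auto
  have nB: "R + x * of_real T \<noteq> 0" using B rp unfolding B_def by auto
  have "P2 x - phi1 x = R*(x+R * of_real s)/(R+x * of_real s) - R*(x+R * of_real T)/(R+x * of_real T)"
    unfolding P2_eq[OF xr rp(2)] phi1_eq[OF xr rp(1)] s_def T_def R_def ..
  also have "\<dots> = R*(of_real s - of_real T)*(R^2-x^2)/((R+x * of_real s)*(R+x * of_real T))"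
    by (rule alg5[OF nA nB])
  finally have eq: "cmod (P2 x - phi1 x) = r * \<bar>s - T\<bar> * cmod (R^2 - x^2) / (A * B)"
    using rp by (simp add: norm_mult norm_divide A_def B_def R_def flip: of_real_diff)
  have N: "cmod (R^2 - x^2) \<le> 2*r^2"
  proof -
    have "cmod (R^2 - x^2) \<le> cmod (R^2) + cmod (x^2)" by (rule norm_triangle_ineq4)
    also have "\<dots> = 2*r^2" using xr rp by (simp add: R_def norm_power)
    finally show ?thesis .
  qed
  have "r * \<bar>s - T\<bar> * cmod (R^2 - x^2) / (A * B) \<le> (r * (9/r^2) * (2*r^2)) / ((r/2) * (r/2))"
  proof (rule frac_le)
    show "0 \<le> r * (9/r^2) * (2*r^2)" using rp by simp
    show "r * \<bar>s - T\<bar> * cmod (R^2 - x^2) \<le> r * (9/r^2) * (2*r^2)"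
      using rp b(1) N by (intro mult_mono) auto
    show "0 < (r/2) * (r/2)" using rp by simp
    show "(r/2) * (r/2) \<le> A * B" using A B rp by (intro mult_mono) auto
  qed
  also have "\<dots> = 72 / r" using rp by (simp add: field_simps power2_eq_square)
  also have "\<dots> \<le> 100 / r" using rp by (simp add: divide_right_mono)
  finally show ?thesis using eq by simp
qed

theorem corollary4p14:
  shows "\<exists>R C5::real. R > 1 \<and> (\<forall>x::complex. cmod x \<ge> R \<longrightarrow> cmod (P2 x - phi1 x) \<le> C5 / cmod x)"
proof (intro exI conjI allI impI)
  show "(10::real) > 1" by simp
  fix x :: complex assume "cmod x \<ge> 10"
  thus "cmod (P2 x - phi1 x) \<le> 100 / cmod x" by (intro main_bound) auto
qed


end
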